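(* Let $\mathcal H$ be a separable complex Hilbert space, $A\in L(\mathcal H)^+$, $\mathcal S\subseteq\mathcal H$ a closed subspace, and let $T\in L(\mathcal H)$ satisfy $R(T)\subseteq\mathcal S$. The following are equivalent: (1) $T$ is an $A$-projection into $\mathcal S$; (2) $AT=T^*A$ and $ATP_{\mathcal S}=AP_{\mathcal S}$; (3) $P_{\mathcal S}AT=P_{\mathcal S}A$.
   Context: $L(\mathcal H)$ denotes bounded linear operators on $\mathcal H$, $L(\mathcal H)^+$ the positive (semidefinite) ones, $R(\cdot)$ the range, and $P_{\mathcal S}$ the orthogonal projection onto $\mathcal S$. For $A\in L(\mathcal H)^+$, $\|x\|_A=\langle Ax,x\rangle^{1/2}$. An operator $T\in L(\mathcal H)$ is an $A$-projection into $\mathcal S$ if $R(T)\subseteq\mathcal S$ and $\|y-Ty\|_A\le\|y-s\|_A$ for all $y\in\mathcal H$ and all $s\in\mathcal S$. *)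

theory Defs
  imports "HOL-Analysis.Analysis"
begin

text \<open>The distribution has no complex vector spaces, so we introduce them as a type class
  on top of the real normed vector space structure: a complex scalar multiplication compatible
  with the real one, and a complex inner product (linear in the first argument, conjugate
  linear in the second) inducing the norm.\<close>

class complex_inner = real_normed_vector +
  fixes scaleC :: "complex \<Rightarrow> 'a \<Rightarrow> 'a" (infixr \<open>*\<^sub>C\<close> 75)
    and cinner :: "'a \<Rightarrow> 'a \<Rightarrow> complex"
  assumes scaleC_add_right: "a *\<^sub>C (x + y) = a *\<^sub>C x + a *\<^sub>C y"
    and scaleC_add_left: "(a + b) *\<^sub>C x = a *\<^sub>C x + b *\<^sub>C x"
    and scaleC_scaleC: "a *\<^sub>C (b *\<^sub>C x) = (a * b) *\<^sub>C x"
    and scaleC_one: "1 *\<^sub>C x = x"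
    and scaleR_scaleC: "scaleR r x = complex_of_real r *\<^sub>C x"
    and cinner_add_left: "cinner (x + y) z = cinner x z + cinner y z"
    and cinner_scaleC_left: "cinner (a *\<^sub>C x) y = a * cinner x y"
    and cinner_commute: "cinner y x = cnj (cinner x y)"
    and cinner_self_nonneg: "0 \<le> Re (cinner x x)"
    and cinner_self_eq_zero: "cinner x x = 0 \<longleftrightarrow> x = 0"
    and norm_eq_sqrt_cinner: "norm x = sqrt (Re (cinner x x))"

class complex_hilbert = complex_inner + complete_space

definition clinear :: "('a::complex_inner \<Rightarrow> 'b::complex_inner) \<Rightarrow> bool" where
  "clinear T \<longleftrightarrow> (\<forall>x y. T (x + y) = T x + T y) \<and> (\<forall>c x. T (c *\<^sub>C x) = c *\<^sub>C T x)"

definition bounded_clinear :: "('a::complex_inner \<Rightarrow> 'b::complex_inner) \<Rightarrow> bool" where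
  "bounded_clinear T \<longleftrightarrow> clinear T \<and> (\<exists>K. \<forall>x. norm (T x) \<le> norm x * K)"

definition cadjoint :: "('a::complex_inner \<Rightarrow> 'a) \<Rightarrow> ('a \<Rightarrow> 'a)" where
  "cadjoint T = (THE S. \<forall>x y. cinner (T x) y = cinner x (S y))"

definition positive_op :: "('a::complex_inner \<Rightarrow> 'a) \<Rightarrow> bool" where
  "positive_op A \<longleftrightarrow> bounded_clinear A \<and> (\<forall>x. Im (cinner (A x) x) = 0 \<and> 0 \<le> Re (cinner (A x) x))"

definition csubspace :: "'a::complex_inner set \<Rightarrow> bool" where
  "csubspace S \<longleftrightarrow> 0 \<in> S \<and> (\<forall>x\<in>S. \<forall>y\<in>S. x + y \<in> S) \<and> (\<forall>c. \<forall>x\<in>S. c *\<^sub>C x \<in> S)"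

definition cproj :: "'a::complex_inner set \<Rightarrow> 'a \<Rightarrow> 'a" where
  "cproj S x = (THE p. p \<in> S \<and> (\<forall>s\<in>S. cinner (x - p) s = 0))"

definition A_norm :: "('a::complex_inner \<Rightarrow> 'a) \<Rightarrow> 'a \<Rightarrow> real" where
  "A_norm A x = sqrt (Re (cinner (A x) x))"

definition A_projection :: "('a::complex_inner \<Rightarrow> 'a) \<Rightarrow> 'a set \<Rightarrow> ('a \<Rightarrow> 'a) \<Rightarrow> bool" where
  "A_projection A S T \<longleftrightarrow> bounded_clinear T \<and> range T \<subseteq> S \<and>
     (\<forall>y. \<forall>s\<in>S. A_norm A (y - T y) \<le> A_norm A (y - s))"

end

theory Submission
  imports Defs
begin


lemma cinner_zero_left[simp]: "cinner (0::'a::complex_inner) x = 0"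
  using cinner_add_left[of 0 0 x] by simp
lemma cinner_minus_left: fixes x :: "'a::complex_inner" shows "cinner (- x) y = - cinner x y"
  using cinner_add_left[of x "-x" y] by (simp add: eq_neg_iff_add_eq_0 add.commute)
lemma cinner_diff_left: fixes x :: "'a::complex_inner" shows "cinner (x - y) z = cinner x z - cinner y z"
  using cinner_add_left[of x "-y" z] by (simp add: cinner_minus_left)
lemma cinner_add_right: fixes x :: "'a::complex_inner" shows "cinner x (y + z) = cinner x y + cinner x z"
  by (metis cinner_commute cinner_add_left complex_cnj_add)
lemma cinner_diff_right: fixes x :: "'a::complex_inner" shows "cinner x (y - z) = cinner x y - cinner x z"
  by (metis cinner_commute cinner_diff_left complex_cnj_diff)
lemma cinner_zero_right[simp]: "cinner x (0::'a::complex_inner) = 0"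
  by (metis cinner_commute cinner_zero_left complex_cnj_zero)
lemma cinner_scaleC_right: fixes x :: "'a::complex_inner" shows "cinner x (a *\<^sub>C y) = cnj a * cinner x y"
  by (metis cinner_commute cinner_scaleC_left complex_cnj_mult)
lemma scaleC_zero_left[simp]: "0 *\<^sub>C (x::'a::complex_inner) = 0"
  by (metis scaleR_scaleC scaleR_zero_left of_real_0)
lemma scaleC_minus1: "(-1) *\<^sub>C (x::'a::complex_inner) = - x"
  by (metis scaleR_scaleC scaleR_minus1_left of_real_1 of_real_minus)
lemma cinner_self_Im: fixes x :: "'a::complex_inner" shows "Im (cinner x x) = 0"
proof -
  have "Im (cinner x x) = - Im (cinner x x)" using arg_cong[OF cinner_commute[of x x], of Im] by simp
  thus ?thesis by simp
qed
lemma norm_sq: fixes x :: "'a::complex_inner" shows "norm x ^ 2 = Re (cinner x x)"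
  by (simp add: norm_eq_sqrt_cinner cinner_self_nonneg)
lemma cinner_ext: fixes x :: "'a::complex_inner" shows "(\<And>y. cinner x y = cinner z y) \<Longrightarrow> x = z"
  by (metis cinner_diff_left cinner_self_eq_zero right_minus_eq)
lemma expand: fixes a :: "'a::complex_inner" shows "cinner (a + t *\<^sub>C b) (u + t *\<^sub>C v) = cinner a u + cnj t * cinner a v + t * cinner b u + t * cnj t * cinner b v"
  by (simp add: cinner_add_left cinner_add_right cinner_scaleC_left cinner_scaleC_right algebra_simps)
lemma re_expand: "Re (q + cnj t * b + t * cnj b + t * cnj t * c) = Re q + 2 * Re (cnj t * b) + (cmod t)^2 * Re c"
  by (simp add: cmod_power2 algebra_simps) (simp add: power2_eq_square algebra_simps)

lemma var0:
  fixes a :: complex and c :: real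
  assumes c: "c \<ge> 0" and h: "\<And>t::complex. 0 \<le> 2 * Re (cnj t * a) + (cmod t)^2 * c"
  shows "a = 0"
proof -
  define r where "r = 1 / (c + 1)"
  have r: "r > 0" "r * c < 1" using c by (auto simp: r_def field_simps)
  have "0 \<le> 2 * Re (cnj (- (complex_of_real r * a)) * a) + (cmod (- (complex_of_real r * a)))^2 * c"
    by (rule h)
  also have "\<dots> = (cmod a)^2 * r * (r * c - 2)"
    using r(1) by (simp add: norm_mult power_mult_distrib cmod_power2) (simp add: power2_eq_square algebra_simps)
  finally have "0 \<le> (cmod a)^2 * r * (r * c - 2)" .
  moreover have "r * c - 2 < 0" using r by simp
  moreover have "(cmod a)^2 * r \<ge> 0" using r by simp
  ultimately have "(cmod a)^2 * r * (r * c - 2) = 0"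
    using mult_nonneg_nonpos[of "(cmod a)^2 * r" "r * c - 2"] by linarith
  thus ?thesis using r by simp
qed




lemma clinear_add: "clinear T \<Longrightarrow> T (x + y) = T x + T y"
  by (simp add: clinear_def)
lemma clinear_scaleC: "clinear T \<Longrightarrow> T (c *\<^sub>C x) = c *\<^sub>C T x"
  by (simp add: clinear_def)
lemma clinear_diff: "clinear T \<Longrightarrow> T (x - y) = T x - T y"
  by (metis clinear_add diff_add_cancel eq_diff_eq)

lemma csub_add: "csubspace S \<Longrightarrow> x \<in> S \<Longrightarrow> y \<in> S \<Longrightarrow> x + y \<in> S"
  by (simp add: csubspace_def)
lemma csub_scaleC: "csubspace S \<Longrightarrow> x \<in> S \<Longrightarrow> c *\<^sub>C x \<in> S"
  by (simp add: csubspace_def)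
lemma csub_0: "csubspace S \<Longrightarrow> 0 \<in> S"
  by (simp add: csubspace_def)
lemma csub_diff: "csubspace S \<Longrightarrow> x \<in> S \<Longrightarrow> y \<in> S \<Longrightarrow> x - y \<in> S"
  by (metis csub_add csub_scaleC scaleC_minus1 diff_conv_add_uminus)
lemma csub_scaleR: "csubspace S \<Longrightarrow> x \<in> S \<Longrightarrow> r *\<^sub>R x \<in> S"
  by (metis csub_scaleC scaleR_scaleC)

lemma parallelogram:
  fixes a b :: "'a::complex_inner"
  shows "norm (a - b)^2 + norm (a + b)^2 = 2 * norm a ^2 + 2 * norm b ^ 2"
  by (simp add: norm_sq cinner_add_left cinner_add_right cinner_diff_left cinner_diff_right)

lemma norm_expand:
  fixes e s :: "'a::complex_inner"
  shows "norm (e + t *\<^sub>C s)^2 = norm e ^2 + 2 * Re (cnj t * cinner e s) + (cmod t)^2 * norm s ^2"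
proof -
  have "norm (e + t *\<^sub>C s)^2 = Re (cinner (e + t *\<^sub>C s) (e + t *\<^sub>C s))" by (rule norm_sq)
  also have "\<dots> = Re (cinner e e + cnj t * cinner e s + t * cnj (cinner e s) + t * cnj t * cinner s s)"
    by (simp add: expand cinner_commute[of e s])
  also have "\<dots> = norm e ^2 + 2 * Re (cnj t * cinner e s) + (cmod t)^2 * norm s ^2"
    by (simp only: re_expand norm_sq)
  finally show ?thesis .
qed




lemma orth_of_min:
  fixes x p :: "'a::complex_inner"
  assumes sub: "csubspace S" and pS: "p \<in> S" and min: "\<And>q. q \<in> S \<Longrightarrow> norm (x - p) \<le> norm (x - q)"
    and sS: "s \<in> S"
  shows "cinner (x - p) s = 0"
proof (rule var0[where c = "norm s ^2"])
  fix t :: complex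
  have "p - t *\<^sub>C s \<in> S" using sub pS sS by (simp add: csub_diff csub_scaleC)
  hence "norm (x - p) \<le> norm (x - (p - t *\<^sub>C s))" by (rule min)
  also have "x - (p - t *\<^sub>C s) = (x - p) + t *\<^sub>C s" by simp
  finally have "norm (x - p) ^2 \<le> norm ((x - p) + t *\<^sub>C s) ^2"
    by (simp add: power_mono)
  thus "0 \<le> 2 * Re (cnj t * cinner (x - p) s) + (cmod t)^2 * norm s ^2"
    by (simp add: norm_expand)
qed simp

lemma proj_exists:
  fixes x :: "'a::{complex_inner,complete_space}"
  assumes sub: "csubspace S" and cl: "closed S"
  shows "\<exists>p\<in>S. \<forall>s\<in>S. cinner (x - p) s = 0"
proof -
  define d where "d = infdist x S"
  have S0: "0 \<in> S" using sub by (rule csub_0)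
  have d0: "d \<ge> 0" by (simp add: d_def infdist_nonneg)
  have dle: "\<And>s. s \<in> S \<Longrightarrow> d \<le> dist x s" by (simp add: d_def infdist_le)
  have ex: "\<exists>s\<in>S. dist x s < d + inverse (real (Suc n))" for n
  proof (rule ccontr)
    assume "\<not> ?thesis"
    hence "\<And>s. s \<in> S \<Longrightarrow> d + inverse (real (Suc n)) \<le> dist x s" by force
    hence "d + inverse (real (Suc n)) \<le> (INF a\<in>S. dist x a)"
      using S0 by (intro cINF_greatest) auto
    moreover have "d = (INF a\<in>S. dist x a)" using S0 unfolding d_def by (intro infdist_notempty) auto
    ultimately have "d + inverse (real (Suc n)) \<le> d" by simp
    moreover have "inverse (real (Suc n)) > 0" by simp
    ultimately show False by linarith
  qed
  then obtain sq where sqS: "\<And>n. sq n \<in> S" and sqd: "\<And>n. dist x (sq n) < d + inverse (real (Suc n))"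
    by metis
  define e where "e n = inverse (real (Suc n))" for n
  have e0: "e n > 0" "e n \<le> 1" for n by (auto simp: e_def inverse_le_1_iff)
  have sqd': "dist x (sq n) ^2 \<le> d^2 + (2*d+1) * e n" for n
  proof -
    have "dist x (sq n) ^2 \<le> (d + e n)^2"
      using sqd[of n] by (intro power_mono) (auto simp: e_def)
    also have "\<dots> = d^2 + (2*d + e n) * e n" by (simp add: power2_eq_square algebra_simps)
    also have "\<dots> \<le> d^2 + (2*d+1) * e n" using e0[of n] by (intro add_left_mono mult_right_mono) auto
    finally show ?thesis .
  qed
  have key: "dist (sq m) (sq n) ^2 \<le> 2 * (2*d+1) * (e m + e n)" for m n
  proof -
    define a where "a = x - sq m"
    define b where "b = x - sq n"
    define mid where "mid = (1/2::real) *\<^sub>R (sq m + sq n)"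
    have midS: "mid \<in> S" using sub sqS by (simp add: mid_def csub_scaleR csub_add)
    have "a + b = 2 *\<^sub>R (x - mid)" by (simp add: a_def b_def mid_def algebra_simps scaleR_2)
    hence nab: "norm (a + b) = 2 * dist x mid" by (simp add: dist_norm)
    have "2 * d \<le> norm (a + b)" using dle[OF midS] nab by simp
    hence "(2*d)^2 \<le> norm (a + b)^2" using d0 by (intro power_mono) auto
    moreover have "norm (a - b)^2 + norm (a + b)^2 = 2 * norm a ^2 + 2 * norm b ^ 2" by (rule parallelogram)
    moreover have "norm a ^2 \<le> d^2 + (2*d+1) * e m" using sqd'[of m] by (simp add: a_def dist_norm)
    moreover have "norm b ^2 \<le> d^2 + (2*d+1) * e n" using sqd'[of n] by (simp add: b_def dist_norm)
    moreover have "norm (a - b) = dist (sq m) (sq n)" by (simp add: a_def b_def dist_norm norm_minus_commute)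
    ultimately show ?thesis by (simp add: power2_eq_square algebra_simps)
  qed
  have "Cauchy sq"
  proof (rule metric_CauchyI)
    fix \<epsilon> :: real assume "\<epsilon> > 0"
    hence "\<epsilon>^2 / (4 * (2*d+1)) > 0" using d0 by simp
    then obtain N where N: "inverse (real (Suc N)) < \<epsilon>^2 / (4 * (2*d+1))"
      using reals_Archimedean by blast
    have "\<forall>m\<ge>N. \<forall>n\<ge>N. dist (sq m) (sq n) < \<epsilon>"
    proof (intro allI impI)
      fix m n assume mn: "m \<ge> N" "n \<ge> N"
      have em: "e m \<le> e N" "e n \<le> e N" using mn by (auto simp: e_def field_simps)
      have "dist (sq m) (sq n) ^2 \<le> 2 * (2*d+1) * (e m + e n)" by (rule key)
      also have "\<dots> \<le> 2 * (2*d+1) * (2 * e N)" using em d0 by (intro mult_left_mono) auto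
      also have "\<dots> < \<epsilon>^2" using N d0 by (simp add: e_def field_simps)
      finally have "dist (sq m) (sq n) ^2 < \<epsilon>^2" .
      thus "dist (sq m) (sq n) < \<epsilon>" using \<open>\<epsilon> > 0\<close>
        by (meson abs_le_square_iff abs_of_nonneg less_imp_le not_le zero_le_dist power_less_imp_less_base)
    qed
    thus "\<exists>N. \<forall>m\<ge>N. \<forall>n\<ge>N. dist (sq m) (sq n) < \<epsilon>" by blast
  qed
  then obtain p where lim: "sq \<longlonglongrightarrow> p" using Cauchy_convergent_iff convergent_def by blast
  have pS: "p \<in> S" using closed_sequentially[OF cl sqS lim] .
  have l1: "(\<lambda>n. dist x (sq n)) \<longlonglongrightarrow> dist x p" using lim by (intro tendsto_intros)
  have l2: "(\<lambda>n. dist x (sq n)) \<longlonglongrightarrow> d"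
  proof (rule real_tendsto_sandwich[where f = "\<lambda>n. d" and h = "\<lambda>n. d + inverse (real (Suc n))"])
    show "\<forall>\<^sub>F n in sequentially. d \<le> dist x (sq n)" using dle sqS by simp
    show "\<forall>\<^sub>F n in sequentially. dist x (sq n) \<le> d + inverse (real (Suc n))"
      by (intro always_eventually allI less_imp_le sqd)
    show "(\<lambda>n. d) \<longlonglongrightarrow> d" by simp
    show "(\<lambda>n. d + inverse (real (Suc n))) \<longlonglongrightarrow> d"
      using tendsto_add[OF tendsto_const LIMSEQ_inverse_real_of_nat, of d] by simp
  qed
  have "dist x p = d" using LIMSEQ_unique[OF l1 l2] .
  hence min: "\<And>q. q \<in> S \<Longrightarrow> norm (x - p) \<le> norm (x - q)" using dle by (simp add: dist_norm)
  show ?thesis using orth_of_min[OF sub pS min] pS by blast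
qed




lemma cproj_uniq0:
  fixes x :: "'a::complex_inner"
  assumes sub: "csubspace S" and "p \<in> S" "\<forall>s\<in>S. cinner (x - p) s = 0"
    and "q \<in> S" "\<forall>s\<in>S. cinner (x - q) s = 0"
  shows "p = q"
proof -
  have "p - q \<in> S" using assms by (simp add: csub_diff)
  hence "cinner (x - q) (p - q) - cinner (x - p) (p - q) = 0" using assms by simp
  hence "cinner (p - q) (p - q) = 0" by (simp add: cinner_diff_left[symmetric])
  thus ?thesis by (simp add: cinner_self_eq_zero)
qed

lemma cproj_char:
  fixes x :: "'a::{complex_inner,complete_space}"
  assumes sub: "csubspace S" and cl: "closed S"
  shows "cproj S x \<in> S \<and> (\<forall>s\<in>S. cinner (x - cproj S x) s = 0)"
proof -
  obtain p where p: "p \<in> S" "\<forall>s\<in>S. cinner (x - p) s = 0" using proj_exists[OF sub cl] by blast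
  show ?thesis unfolding cproj_def
    by (rule theI[of _ p]) (use p cproj_uniq0[OF sub] in blast)+
qed

lemma cproj_uniq:
  fixes x :: "'a::{complex_inner,complete_space}"
  assumes sub: "csubspace S" and cl: "closed S" and "p \<in> S" "\<forall>s\<in>S. cinner (x - p) s = 0"
  shows "cproj S x = p"
  using cproj_uniq0[OF sub _ _ assms(3,4)] cproj_char[OF sub cl, of x] by blast

lemma cauchy_schwarz:
  fixes x y :: "'a::complex_inner"
  shows "cmod (cinner x y) \<le> norm x * norm y"
proof (cases "y = 0")
  case True thus ?thesis by simp
next
  case False
  define a where "a = cinner x y"
  define r where "r = 1 / (norm y)^2"
  have ny: "norm y > 0" using False by simp
  have r0: "r \<ge> 0" by (simp add: r_def)
  have "0 \<le> norm (x + (- (complex_of_real r * a)) *\<^sub>C y)^2" by simp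
  also have "\<dots> = norm x ^2 + 2 * Re (cnj (- (complex_of_real r * a)) * a) + (cmod (- (complex_of_real r * a)))^2 * norm y ^2"
    by (simp add: norm_expand a_def)
  also have "\<dots> = norm x ^2 - 2 * r * (cmod a)^2 + r^2 * (cmod a)^2 * norm y ^2"
    using r0 by (simp add: norm_mult power_mult_distrib cmod_power2) (simp add: power2_eq_square algebra_simps)
  finally have h: "0 \<le> norm x ^2 - 2 * r * (cmod a)^2 + r^2 * (cmod a)^2 * norm y ^2" .
  have r1: "r * norm y ^2 = 1" using ny by (simp add: r_def)
  have "r^2 * (cmod a)^2 * norm y ^2 = r * (cmod a)^2 * (r * norm y ^2)" by (simp add: power2_eq_square mult_ac)
  also have "\<dots> = r * (cmod a)^2" using r1 by simp
  finally have "r * (cmod a)^2 \<le> norm x ^2" using h by linarith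
  hence "r * (cmod a)^2 * norm y ^2 \<le> norm x ^2 * norm y ^2" by (simp add: mult_right_mono)
  also have "r * (cmod a)^2 * norm y ^2 = (cmod a)^2" using r1 by (simp add: mult_ac)
  finally have "(cmod a)^2 \<le> (norm x * norm y)^2" by (simp add: power_mult_distrib)
  thus ?thesis unfolding a_def by (rule power2_le_imp_le) simp
qed

lemma riesz:
  fixes f :: "'a::{complex_inner,complete_space} \<Rightarrow> complex"
  assumes add: "\<And>x y. f (x + y) = f x + f y" and sc: "\<And>c x. f (c *\<^sub>C x) = c * f x"
    and bd: "\<And>x. cmod (f x) \<le> norm x * K"
  shows "\<exists>z. \<forall>x. f x = cinner x z"
proof (cases "\<forall>x. f x = 0")
  case True thus ?thesis by (intro exI[of _ 0]) simp
next
  case False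
  then obtain u where u: "f u \<noteq> 0" by blast
  define N where "N = {x. f x = 0}"
  have f0: "f 0 = 0" using add[of 0 0] by simp
  have fdiff: "f (x - y) = f x - f y" for x y by (metis add diff_add_cancel eq_diff_eq)
  have subN: "csubspace N" unfolding N_def csubspace_def using f0 add sc by simp
  have "bounded_linear f"
  proof (rule bounded_linear_intro[where K = K])
    show "f (x + y) = f x + f y" for x y by (rule add)
    show "f (r *\<^sub>R x) = r *\<^sub>R f x" for r x by (simp add: scaleR_scaleC sc scaleR_conv_of_real)
    show "norm (f x) \<le> norm x * K" for x using bd by simp
  qed
  hence "continuous_on UNIV f" by (simp add: linear_continuous_on)
  hence clN: "closed N" unfolding N_def by (intro closed_Collect_eq) auto
  define p where "p = cproj N u"
  have p: "p \<in> N" "\<forall>s\<in>N. cinner (u - p) s = 0" using cproj_char[OF subN clN, of u] by (simp_all add: p_def)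
  define w where "w = u - p"
  have fw: "f w = f u" using p(1) by (simp add: w_def fdiff N_def)
  have wne: "w \<noteq> 0" using fw u f0 by auto
  have ww: "cinner w w \<noteq> 0" using wne by (simp add: cinner_self_eq_zero)
  have eq: "f x * cinner w w = f w * cinner x w" for x
  proof -
    define v where "v = f x *\<^sub>C w - f w *\<^sub>C x"
    have "f v = 0" by (simp add: v_def fdiff sc mult.commute)
    hence "v \<in> N" by (simp add: N_def)
    hence "cinner w v = 0" using p(2) by (simp add: w_def)
    hence "cinner v w = 0" by (metis cinner_commute complex_cnj_zero)
    thus ?thesis by (simp add: v_def cinner_diff_left cinner_scaleC_left)
  qed
  show ?thesis
  proof (intro exI allI)
    fix x
    have "cinner x (cnj (f w / cinner w w) *\<^sub>C w) = f w / cinner w w * cinner x w"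
      by (simp add: cinner_scaleC_right)
    also have "\<dots> = f x" using eq[of x] ww by (simp add: field_simps)
    finally show "f x = cinner x (cnj (f w / cinner w w) *\<^sub>C w)" by simp
  qed
qed

lemma cadjoint_char:
  fixes T :: "'a::{complex_inner,complete_space} \<Rightarrow> 'a"
  assumes bT: "bounded_clinear T"
  shows "cinner (T x) y = cinner x (cadjoint T y)"
proof -
  obtain K where K: "\<And>x. norm (T x) \<le> norm x * K" and lT: "clinear T"
    using bT unfolding bounded_clinear_def by blast
  have "\<forall>y. \<exists>z. \<forall>x. cinner (T x) y = cinner x z"
  proof
    fix y
    show "\<exists>z. \<forall>x. cinner (T x) y = cinner x z"
    proof (rule riesz[where K = "K * norm y"])
      show "cinner (T (x + x')) y = cinner (T x) y + cinner (T x') y" for x x'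
        by (simp add: clinear_add[OF lT] cinner_add_left)
      show "cinner (T (c *\<^sub>C x)) y = c * cinner (T x) y" for c x
        by (simp add: clinear_scaleC[OF lT] cinner_scaleC_left)
      show "cmod (cinner (T x) y) \<le> norm x * (K * norm y)" for x
      proof -
        have "cmod (cinner (T x) y) \<le> norm (T x) * norm y" by (rule cauchy_schwarz)
        also have "\<dots> \<le> norm x * K * norm y" using K[of x] by (intro mult_right_mono) auto
        finally show ?thesis by (simp add: mult.assoc)
      qed
    qed
  qed
  then obtain S where S: "\<forall>y x. cinner (T x) y = cinner x (S y)" by metis
  have "\<forall>x y. cinner (T x) y = cinner x (cadjoint T y)"
    unfolding cadjoint_def
  proof (rule theI[of _ S])
    show "\<forall>x y. cinner (T x) y = cinner x (S y)" using S by blast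
    fix S' assume S': "\<forall>x y. cinner (T x) y = cinner x (S' y)"
    show "S' = S"
    proof
      fix y
      show "S' y = S y"
        by (rule cinner_ext) (metis S S' cinner_commute)
    qed
  qed
  thus ?thesis by blast
qed




lemma pos_sa:
  fixes A :: "'a::complex_inner \<Rightarrow> 'a"
  assumes pA: "positive_op A"
  shows "cinner (A x) y = cinner x (A y)"
proof -
  have lA: "clinear A" using pA by (simp add: positive_op_def bounded_clinear_def)
  have im: "\<And>z. Im (cinner (A z) z) = 0" using pA by (simp add: positive_op_def)
  define a where "a = cinner (A x) y"
  define b where "b = cinner (A y) x"
  have e1: "cinner (A (x + 1 *\<^sub>C y)) (x + 1 *\<^sub>C y) = cinner (A x) x + cnj 1 * a + 1 * b + 1 * cnj 1 * cinner (A y) y"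
    unfolding a_def b_def clinear_add[OF lA] clinear_scaleC[OF lA] by (rule expand)
  have e2: "cinner (A (x + \<i> *\<^sub>C y)) (x + \<i> *\<^sub>C y) = cinner (A x) x + cnj \<i> * a + \<i> * b + \<i> * cnj \<i> * cinner (A y) y"
    unfolding a_def b_def clinear_add[OF lA] clinear_scaleC[OF lA] by (rule expand)
  have h1: "Im a + Im b = 0" using im[of "x + 1 *\<^sub>C y"] im[of x] im[of y] unfolding e1 by simp
  have h2: "Re b - Re a = 0" using im[of "x + \<i> *\<^sub>C y"] im[of x] im[of y] unfolding e2 by simp
  have "a = cnj b" using h1 h2 by (intro complex_eqI) auto
  also have "cnj b = cinner x (A y)" by (simp add: b_def cinner_commute[of x])
  finally show ?thesis by (simp add: a_def)
qed

lemma pos_zero: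
  fixes A :: "'a::complex_inner \<Rightarrow> 'a"
  assumes pA: "positive_op A" and w: "cinner (A w) w = 0"
  shows "A w = 0"
proof -
  have lA: "clinear A" using pA by (simp add: positive_op_def bounded_clinear_def)
  have re: "\<And>z. 0 \<le> Re (cinner (A z) z)" using pA by (simp add: positive_op_def)
  have "cinner (A w) v = 0" for v
  proof (rule var0[where c = "Re (cinner (A v) v)"])
    show "0 \<le> Re (cinner (A v) v)" by (rule re)
    fix t :: complex
    have "cinner (A (w + t *\<^sub>C v)) (w + t *\<^sub>C v) = cinner (A w) w + cnj t * cinner (A w) v + t * cinner (A v) w + t * cnj t * cinner (A v) v"
      unfolding clinear_add[OF lA] clinear_scaleC[OF lA] by (rule expand)
    also have "cinner (A v) w = cnj (cinner (A w) v)"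
      by (simp add: pos_sa[OF pA] cinner_commute[of v])
    finally have "Re (cinner (A (w + t *\<^sub>C v)) (w + t *\<^sub>C v)) = Re (cinner (A w) w) + 2 * Re (cnj t * cinner (A w) v) + (cmod t)^2 * Re (cinner (A v) v)"
      by (simp only: re_expand)
    hence "Re (cinner (A (w + t *\<^sub>C v)) (w + t *\<^sub>C v)) = 2 * Re (cnj t * cinner (A w) v) + (cmod t)^2 * Re (cinner (A v) v)"
      by (simp add: w)
    thus "0 \<le> 2 * Re (cnj t * cinner (A w) v) + (cmod t)^2 * Re (cinner (A v) v)"
      using re by metis
  qed
  hence "cinner (A w) (A w) = 0" by blast
  thus ?thesis by (simp add: cinner_self_eq_zero)
qed




theorem mainTheorem1:
  fixes A T :: "'a::complex_hilbert \<Rightarrow> 'a" and S :: "'a set"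
  assumes "separable_space (euclidean :: 'a topology)"
    and "positive_op A"
    and "csubspace S" and "closed S"
    and "bounded_clinear T" and "range T \<subseteq> S"
  shows "(A_projection A S T \<longleftrightarrow>
            (A \<circ> T = cadjoint T \<circ> A \<and> A \<circ> T \<circ> cproj S = A \<circ> cproj S))
       \<and> (A_projection A S T \<longleftrightarrow> cproj S \<circ> A \<circ> T = cproj S \<circ> A)"
proof -
  have pA: "positive_op A" and sub: "csubspace S" and cl: "closed S" and bT: "bounded_clinear T"
    and rT: "range T \<subseteq> S" using assms by auto
  have lA: "clinear A" using pA by (simp add: positive_op_def bounded_clinear_def)
  have lT: "clinear T" using bT by (simp add: bounded_clinear_def)
  have re: "\<And>z. 0 \<le> Re (cinner (A z) z)" using pA by (simp add: positive_op_def)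
  define P where "P = cproj S"
  have Pc: "\<And>x. P x \<in> S" "\<And>x s. s \<in> S \<Longrightarrow> cinner (x - P x) s = 0"
    using cproj_char[OF sub cl] by (auto simp: P_def)
  have Pu: "\<And>x p. p \<in> S \<Longrightarrow> \<forall>s\<in>S. cinner (x - p) s = 0 \<Longrightarrow> P x = p"
    unfolding P_def by (rule cproj_uniq[OF sub cl])
  have Peq: "P u = P v \<longleftrightarrow> (\<forall>s\<in>S. cinner (u - v) s = 0)" for u v
  proof
    assume h: "P u = P v"
    show "\<forall>s\<in>S. cinner (u - v) s = 0"
    proof
      fix s assume s: "s \<in> S"
      have "cinner (u - v) s = cinner ((u - P u) - (v - P v)) s" using h by simp
      also have "\<dots> = cinner (u - P u) s - cinner (v - P v) s" by (rule cinner_diff_left)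
      finally have "cinner (u - v) s = cinner (u - P u) s - cinner (v - P v) s" .
      thus "cinner (u - v) s = 0" using Pc(2)[OF s] by simp
    qed
  next
    assume h: "\<forall>s\<in>S. cinner (u - v) s = 0"
    have "\<forall>s\<in>S. cinner (u - P v) s = 0"
    proof
      fix s assume s: "s \<in> S"
      have "cinner (u - P v) s = cinner ((u - v) + (v - P v)) s" by simp
      also have "\<dots> = cinner (u - v) s + cinner (v - P v) s" by (rule cinner_add_left)
      finally have "cinner (u - P v) s = cinner (u - v) s + cinner (v - P v) s" .
      thus "cinner (u - P v) s = 0" using Pc(2)[OF s] h s by simp
    qed
    thus "P u = P v" using Pu[OF Pc(1)] by blast
  qed
  have TS: "\<And>y. T y \<in> S" using rT by blast
  have sa: "\<And>x y. cinner (A x) y = cinner x (A y)" by (rule pos_sa[OF pA])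
  have adj: "\<And>x y. cinner (T x) y = cinner x (cadjoint T y)" by (rule cadjoint_char[OF bT])
  define Orth where "Orth \<longleftrightarrow> (\<forall>y. \<forall>s\<in>S. cinner (A y - A (T y)) s = 0)"
  have Oeq: "Orth \<Longrightarrow> s \<in> S \<Longrightarrow> cinner (A y) s = cinner (A (T y)) s" for y s
    unfolding Orth_def by (metis cinner_diff_left right_minus_eq)
  have anle: "A_norm A u \<le> A_norm A v \<longleftrightarrow> Re (cinner (A u) u) \<le> Re (cinner (A v) v)" for u v
    by (simp add: A_norm_def)
  have E1: "A_projection A S T \<longleftrightarrow> Orth"
  proof
    assume h: "A_projection A S T"
    show Orth unfolding Orth_def
    proof (intro allI ballI)
      fix y s assume s: "s \<in> S"
      define e where "e = y - T y"
      have Ae: "A e = A y - A (T y)" by (simp add: e_def clinear_diff[OF lA])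
      have "cinner (A e) s = 0"
      proof (rule var0[where c = "Re (cinner (A s) s)"])
        show "0 \<le> Re (cinner (A s) s)" by (rule re)
        fix t :: complex
        have qS: "T y - t *\<^sub>C s \<in> S" using TS s sub by (simp add: csub_diff csub_scaleC)
        have "A_norm A (y - T y) \<le> A_norm A (y - (T y - t *\<^sub>C s))"
          using h qS by (simp add: A_projection_def)
        hence le: "Re (cinner (A e) e) \<le> Re (cinner (A (e + t *\<^sub>C s)) (e + t *\<^sub>C s))"
          unfolding anle e_def by (simp add: algebra_simps)
        have "cinner (A (e + t *\<^sub>C s)) (e + t *\<^sub>C s) = cinner (A e) e + cnj t * cinner (A e) s + t * cinner (A s) e + t * cnj t * cinner (A s) s"
          unfolding clinear_add[OF lA] clinear_scaleC[OF lA] by (rule expand)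
        also have "cinner (A s) e = cnj (cinner (A e) s)"
          by (simp add: sa cinner_commute[of s])
        finally have "Re (cinner (A (e + t *\<^sub>C s)) (e + t *\<^sub>C s)) = Re (cinner (A e) e) + 2 * Re (cnj t * cinner (A e) s) + (cmod t)^2 * Re (cinner (A s) s)"
          by (simp only: re_expand)
        thus "0 \<le> 2 * Re (cnj t * cinner (A e) s) + (cmod t)^2 * Re (cinner (A s) s)"
          using le by linarith
      qed
      thus "cinner (A y - A (T y)) s = 0" by (simp add: Ae)
    qed
  next
    assume h: Orth
    have "\<forall>y. \<forall>s\<in>S. A_norm A (y - T y) \<le> A_norm A (y - s)"
    proof (intro allI ballI)
      fix y s assume s: "s \<in> S"
      define e where "e = y - T y"
      define v where "v = T y - s"
      have vS: "v \<in> S" using TS s sub by (simp add: v_def csub_diff)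
      have Ae: "A e = A y - A (T y)" by (simp add: e_def clinear_diff[OF lA])
      have o1: "cinner (A e) v = 0" using h vS by (simp add: Orth_def Ae)
      have o2: "cinner (A v) e = 0" using o1 by (simp add: sa cinner_commute[of v])
      have "cinner (A (e + 1 *\<^sub>C v)) (e + 1 *\<^sub>C v) = cinner (A e) e + cnj 1 * cinner (A e) v + 1 * cinner (A v) e + 1 * cnj 1 * cinner (A v) v"
        unfolding clinear_add[OF lA] clinear_scaleC[OF lA] by (rule expand)
      moreover have "e + 1 *\<^sub>C v = y - s" by (simp add: e_def v_def scaleC_one)
      ultimately have "Re (cinner (A (y - s)) (y - s)) = Re (cinner (A e) e) + Re (cinner (A v) v)"
        using o1 o2 by simp
      thus "A_norm A (y - T y) \<le> A_norm A (y - s)"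
        unfolding anle e_def using re[of v] by simp
    qed
    thus "A_projection A S T" using bT rT by (simp add: A_projection_def)
  qed
  have E3: "(cproj S \<circ> A \<circ> T = cproj S \<circ> A) \<longleftrightarrow> Orth"
  proof -
    have "(cproj S \<circ> A \<circ> T = cproj S \<circ> A) \<longleftrightarrow> (\<forall>y. P (A y) = P (A (T y)))"
      by (auto simp: fun_eq_iff P_def)
    also have "\<dots> \<longleftrightarrow> Orth" by (simp add: Peq Orth_def)
    finally show ?thesis .
  qed
  have E2: "(A \<circ> T = cadjoint T \<circ> A \<and> A \<circ> T \<circ> cproj S = A \<circ> cproj S) \<longleftrightarrow> Orth"
  proof
    assume h: "A \<circ> T = cadjoint T \<circ> A \<and> A \<circ> T \<circ> cproj S = A \<circ> cproj S"
    have h1: "\<And>x. A (T x) = cadjoint T (A x)" using h by (metis comp_apply)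
    have h2: "\<And>x. A (T (P x)) = A (P x)" using h unfolding P_def by (metis comp_apply)
    show Orth unfolding Orth_def
    proof (intro allI ballI)
      fix y s assume s: "s \<in> S"
      have Ps: "P s = s" using Pu[OF s] by simp
      have "cinner (A (T y)) s = cinner (cadjoint T (A y)) s" by (simp add: h1)
      also have "\<dots> = cnj (cinner (T s) (A y))" by (simp add: adj cinner_commute[of _ s])
      also have "\<dots> = cinner (A y) (T s)" by (simp add: cinner_commute[of "A y"])
      also have "\<dots> = cinner y (A (T s))" by (simp add: sa)
      also have "A (T s) = A s" using h2[of s] Ps by simp
      also have "cinner y (A s) = cinner (A y) s" by (simp add: sa)
      finally show "cinner (A y - A (T y)) s = 0" by (simp add: cinner_diff_left)
    qed
  next
    assume h: Orth
    have "A \<circ> T = cadjoint T \<circ> A"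
    proof
      fix x
      show "(A \<circ> T) x = (cadjoint T \<circ> A) x"
      proof (simp, rule cinner_ext)
        fix y
        have "cinner (A (T x)) y = cinner (T x) (A y)" by (simp add: sa)
        also have "\<dots> = cnj (cinner (A y) (T x))" by (simp add: cinner_commute[of "T x"])
        also have "cinner (A y) (T x) = cinner (A (T y)) (T x)" using Oeq[OF h TS] by simp
        also have "\<dots> = cinner (T y) (A (T x))" by (simp add: sa)
        also have "cnj \<dots> = cinner (A (T x)) (T y)" by (simp add: cinner_commute[of "T y"])
        also have "\<dots> = cinner (A x) (T y)" using Oeq[OF h TS] by simp
        also have "\<dots> = cnj (cinner (T y) (A x))" by (simp add: cinner_commute[of "T y"])
        also have "\<dots> = cnj (cinner y (cadjoint T (A x)))" by (simp add: adj)
        also have "\<dots> = cinner (cadjoint T (A x)) y" by (simp add: cinner_commute[of y])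
        finally show "cinner (A (T x)) y = cinner (cadjoint T (A x)) y" .
      qed
    qed
    moreover have "A \<circ> T \<circ> cproj S = A \<circ> cproj S"
    proof
      fix x
      define w where "w = P x - T (P x)"
      have wS: "w \<in> S" using Pc(1) TS sub by (simp add: w_def csub_diff)
      have Aw: "A w = A (P x) - A (T (P x))" by (simp add: w_def clinear_diff[OF lA])
      have "cinner (A w) w = 0" using h wS by (simp add: Orth_def Aw)
      hence "A w = 0" by (rule pos_zero[OF pA])
      thus "(A \<circ> T \<circ> cproj S) x = (A \<circ> cproj S) x" by (simp add: Aw P_def)
    qed
    ultimately show "A \<circ> T = cadjoint T \<circ> A \<and> A \<circ> T \<circ> cproj S = A \<circ> cproj S" by blast
  qed
  show ?thesis using E1 E2 E3 by blast
qed


end
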